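(* Let $A$ be a linearly ordered set. Then for all passable games $G,H$ over $A$, we have $G\lhd H$ or $H\le G$.
   Context: Games over a poset $A$ are defined inductively: for each $a\in A$ there is an atomic game $[a]$, which has no options; and if $L$ and $R$ are non-empty sets of games, then $\{L\mid R\}$ is a composite game with left options $L$ and right options $R$. The relations $\le$ and $\lhd$ are defined by simultaneous recursion: $G\le H$ iff (1) every left option $G^L$ of $G$ satisfies $G^L\lhd H$, (2) every right option $H^R$ of $H$ satisfies $G\lhd H^R$, and (3) if $G$ or $H$ is atomic then $G\lhd H$; and $G\lhd H$ iff (1) some right option $G^R$ of $G$ satisfies $G^R\le H$, or (2) some left option $H^L$ of $H$ satisfies $G\le H^L$, or (3) $G=[a]$, $H=[b]$ are atomic and $a\le b$. A game $G$ is passable if $G\lhd G$ and recursively all its options are passable. *)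

theory Defs
  imports Main
begin

text \<open>A composite game carries its (non-empty) sets of
left and right options as the ranges of families indexed by a type 'i; since every
type is non-empty these ranges are automatically non-empty, and every non-empty set
of games of cardinality at most |'i| arises this way.  As 'i is arbitrary, all games
are covered.\<close>

datatype ('a, 'i) game = Atom 'a | Comp "'i \<Rightarrow> ('a, 'i) game" "'i \<Rightarrow> ('a, 'i) game"

fun lopts :: "('a, 'i) game \<Rightarrow> ('a, 'i) game set" where
  "lopts (Atom a) = {}"
| "lopts (Comp L R) = range L"

fun ropts :: "('a, 'i) game \<Rightarrow> ('a, 'i) game set" where
  "ropts (Atom a) = {}"
| "ropts (Comp L R) = range R"

fun is_atom :: "('a, 'i) game \<Rightarrow> bool" where
  "is_atom (Atom a) = True"
| "is_atom (Comp L R) = False"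

text \<open>The simultaneous recursion defining \<le> and \<lhd>; the recursion is well-founded,
so the inductive (least fixed point) definition coincides with it.\<close>

inductive game_le :: "('a::order, 'i) game \<Rightarrow> ('a, 'i) game \<Rightarrow> bool"
      and game_lf :: "('a::order, 'i) game \<Rightarrow> ('a, 'i) game \<Rightarrow> bool"
where
  le_intro: "\<lbrakk> \<forall>GL\<in>lopts G. game_lf GL H;
              \<forall>HR\<in>ropts H. game_lf G HR;
              (is_atom G \<or> is_atom H) \<longrightarrow> game_lf G H \<rbrakk> \<Longrightarrow> game_le G H"
| lf_right: "\<lbrakk> GR \<in> ropts G; game_le GR H \<rbrakk> \<Longrightarrow> game_lf G H"
| lf_left: "\<lbrakk> HL \<in> lopts H; game_le G HL \<rbrakk> \<Longrightarrow> game_lf G H"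
| lf_atom: "a \<le> b \<Longrightarrow> game_lf (Atom a) (Atom b)"

inductive passable :: "('a::order, 'i) game \<Rightarrow> bool" where
  "\<lbrakk> game_lf G G; \<forall>G'\<in>lopts G \<union> ropts G. passable G' \<rbrakk> \<Longrightarrow> passable G"

end

theory Submission
  imports Defs
begin

lemma lf_atom_left_iff:
  "game_lf (Atom b) X \<longleftrightarrow>
     (case X of Atom a \<Rightarrow> b \<le> a | Comp L R \<Rightarrow> (\<exists>i. game_le (Atom b) (L i)))"
proof
  assume "game_lf (Atom b) X"
  then show "case X of Atom a \<Rightarrow> b \<le> a | Comp L R \<Rightarrow> (\<exists>i. game_le (Atom b) (L i))"
    by (cases rule: game_lf.cases) (cases X; auto)+
next
  assume h: "case X of Atom a \<Rightarrow> b \<le> a | Comp L R \<Rightarrow> (\<exists>i. game_le (Atom b) (L i))"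
  show "game_lf (Atom b) X"
  proof (cases X)
    case (Atom a) then show ?thesis using h by (simp add: lf_atom)
  next
    case (Comp L R) then show ?thesis using h lf_left[of "L i" "Comp L R" "Atom b" for i] by auto
  qed
qed

lemma lf_atom_right_iff:
  "game_lf X (Atom b) \<longleftrightarrow>
     (case X of Atom a \<Rightarrow> a \<le> b | Comp L R \<Rightarrow> (\<exists>i. game_le (R i) (Atom b)))"
proof
  assume "game_lf X (Atom b)"
  then show "case X of Atom a \<Rightarrow> a \<le> b | Comp L R \<Rightarrow> (\<exists>i. game_le (R i) (Atom b))"
    by (cases rule: game_lf.cases) (cases X; auto)+
next
  assume h: "case X of Atom a \<Rightarrow> a \<le> b | Comp L R \<Rightarrow> (\<exists>i. game_le (R i) (Atom b))"
  show "game_lf X (Atom b)"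
  proof (cases X)
    case (Atom a) then show ?thesis using h by (simp add: lf_atom)
  next
    case (Comp L R) then show ?thesis using h lf_right[of "R i" "Comp L R" "Atom b" for i] by auto
  qed
qed

lemma le_atom_left_iff:
  "game_le (Atom b) X \<longleftrightarrow> game_lf (Atom b) X \<and> (\<forall>XR\<in>ropts X. game_lf (Atom b) XR)"
proof
  assume "game_le (Atom b) X" then show "game_lf (Atom b) X \<and> (\<forall>XR\<in>ropts X. game_lf (Atom b) XR)"
    by (cases rule: game_le.cases) auto
next
  assume "game_lf (Atom b) X \<and> (\<forall>XR\<in>ropts X. game_lf (Atom b) XR)"
  then show "game_le (Atom b) X" by (intro le_intro) auto
qed

lemma le_atom_right_iff:
  "game_le X (Atom b) \<longleftrightarrow> game_lf X (Atom b) \<and> (\<forall>XL\<in>lopts X. game_lf XL (Atom b))"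
proof
  assume "game_le X (Atom b)" then show "game_lf X (Atom b) \<and> (\<forall>XL\<in>lopts X. game_lf XL (Atom b))"
    by (cases rule: game_le.cases) auto
next
  assume "game_lf X (Atom b) \<and> (\<forall>XL\<in>lopts X. game_lf XL (Atom b))"
  then show "game_le X (Atom b)" by (intro le_intro) auto
qed

lemma trans_left:
  fixes Y Z W V :: "('a::order, 'i) game"
  shows "game_le Y Z \<Longrightarrow> (game_le (Atom b) Y \<longrightarrow> game_le (Atom b) Z) \<and> (game_lf (Atom b) Y \<longrightarrow> game_lf (Atom b) Z)"
    and "game_lf W V \<Longrightarrow> game_le (Atom b) W \<longrightarrow> game_lf (Atom b) V"
proof (induct rule: game_le_game_lf.inducts)
  case (le_intro G H)
  have q: "game_lf (Atom b) G \<Longrightarrow> game_lf (Atom b) H"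
  proof (cases G)
    case (Atom a)
    assume "game_lf (Atom b) G"
    then have "game_le (Atom b) G" using Atom by (simp add: le_atom_left_iff)
    then show ?thesis using le_intro(3) Atom by simp
  next
    case (Comp L R)
    assume "game_lf (Atom b) G"
    then obtain i where "game_le (Atom b) (L i)" using Comp by (auto simp: lf_atom_left_iff)
    then show ?thesis using le_intro(1) Comp by auto
  qed
  show ?case using q le_intro(2) by (auto simp: le_atom_left_iff)
next
  case (lf_right GR G H)
  show ?case
  proof
    assume "game_le (Atom b) G"
    then have "game_lf (Atom b) GR" using lf_right(1) le_atom_left_iff[THEN iffD1] by blast
    then show "game_lf (Atom b) H" using lf_right(3) by blast
  qed
next
  case (lf_left HL H G)
  show ?case
  proof
    assume "game_le (Atom b) G"
    then have "game_le (Atom b) HL" using lf_left(3) by blast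
    then show "game_lf (Atom b) H" using lf_left(1) by (rule game_le_game_lf.lf_left[rotated])
  qed
next
  case (lf_atom a c)
  show ?case
  proof
    assume "game_le (Atom b) (Atom a :: ('a, 'i) game)"
    then have "game_lf (Atom b) (Atom a :: ('a, 'i) game)" by (simp add: le_atom_left_iff)
    then have "b \<le> a" using lf_atom_left_iff[of b "Atom a :: ('a, 'i) game"] by simp
    then show "game_lf (Atom b) (Atom c :: ('a, 'i) game)" using lf_atom(1) by (auto intro: game_le_game_lf.lf_atom)
  qed
qed

lemma trans_right:
  fixes Y Z W V :: "('a::order, 'i) game"
  shows "game_le Y Z \<Longrightarrow> (game_le Z (Atom b) \<longrightarrow> game_le Y (Atom b)) \<and> (game_lf Z (Atom b) \<longrightarrow> game_lf Y (Atom b))"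
    and "game_lf W V \<Longrightarrow> game_le V (Atom b) \<longrightarrow> game_lf W (Atom b)"
proof (induct rule: game_le_game_lf.inducts)
  case (le_intro G H)
  have q: "game_lf H (Atom b) \<Longrightarrow> game_lf G (Atom b)"
  proof (cases H)
    case (Atom a)
    assume "game_lf H (Atom b)"
    then have "game_le H (Atom b)" using Atom by (simp add: le_atom_right_iff)
    then show ?thesis using le_intro(3) Atom by simp
  next
    case (Comp L R)
    assume "game_lf H (Atom b)"
    then obtain i where "game_le (R i) (Atom b)" using Comp by (auto simp: lf_atom_right_iff)
    then show ?thesis using le_intro(2) Comp by auto
  qed
  show ?case using q le_intro(1) by (auto simp: le_atom_right_iff)
next
  case (lf_right GR G H)
  show ?case
  proof
    assume "game_le H (Atom b)"
    then have "game_le GR (Atom b)" using lf_right(3) by blast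
    then show "game_lf G (Atom b)" using lf_right(1) by (rule game_le_game_lf.lf_right[rotated])
  qed
next
  case (lf_left HL H G)
  show ?case
  proof
    assume "game_le H (Atom b)"
    then have "game_lf HL (Atom b)" using lf_left(1) le_atom_right_iff[THEN iffD1] by blast
    then show "game_lf G (Atom b)" using lf_left(3) by blast
  qed
next
  case (lf_atom a c)
  show ?case
  proof
    assume "game_le (Atom c) (Atom b :: ('a, 'i) game)"
    then have "game_lf (Atom c) (Atom b :: ('a, 'i) game)" by (simp add: le_atom_right_iff)
    then have "c \<le> b" using lf_atom_right_iff[of "Atom c :: ('a, 'i) game" b] by simp
    then show "game_lf (Atom a) (Atom b :: ('a, 'i) game)" using lf_atom(1) by (auto intro: game_le_game_lf.lf_atom)
  qed
qed

lemma lfL_Atom: "game_lf (Atom b) (Atom a :: ('a::order, 'i) game) \<longleftrightarrow> b \<le> a"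
  using lf_atom_left_iff[of b "Atom a :: ('a, 'i) game"] by simp
lemma lfL_Comp: "game_lf (Atom b) (Comp L R) \<longleftrightarrow> (\<exists>i. game_le (Atom b) (L i))"
  using lf_atom_left_iff[of b "Comp L R"] by simp
lemma lfR_Atom: "game_lf (Atom a :: ('a::order, 'i) game) (Atom b) \<longleftrightarrow> a \<le> b"
  using lf_atom_right_iff[of "Atom a :: ('a, 'i) game" b] by simp
lemma lfR_Comp: "game_lf (Comp L R) (Atom b) \<longleftrightarrow> (\<exists>i. game_le (R i) (Atom b))"
  using lf_atom_right_iff[of "Comp L R" b] by simp

lemma atom_lemma:
  fixes b :: "'a::linorder"
  assumes "passable X"
  shows "(game_le X (Atom b) \<or> game_lf (Atom b) X) \<and> (game_lf X (Atom b) \<or> game_le (Atom b) X)"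
  using assms
proof (induction rule: passable.induct)
  case (1 X)
  show ?case
  proof (cases X)
    case (Atom a)
    then show ?thesis
      by (auto simp: le_atom_right_iff le_atom_left_iff lfL_Atom lfR_Atom)
  next
    case (Comp L R)
    have IHL: "\<And>i. (game_le (L i) (Atom b) \<or> game_lf (Atom b) (L i)) \<and> (game_lf (L i) (Atom b) \<or> game_le (Atom b) (L i))"
      using 1(2) Comp by auto
    have IHR: "\<And>i. (game_le (R i) (Atom b) \<or> game_lf (Atom b) (R i)) \<and> (game_lf (R i) (Atom b) \<or> game_le (Atom b) (R i))"
      using 1(2) Comp by auto
    have pass: "(\<exists>i. game_le (R i) X) \<or> (\<exists>i. game_le X (L i))"
      using 1(1) Comp by (cases rule: game_lf.cases) auto
    have part1: "game_le X (Atom b) \<or> game_lf (Atom b) X"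
    proof (rule disjCI)
      assume nq: "\<not> game_lf (Atom b) X"
      then have nQ: "\<And>i. \<not> game_le (Atom b) (L i)" using Comp by (auto simp: lfL_Comp)
      then have pL: "\<And>i. game_lf (L i) (Atom b)" using IHL by blast
      have "game_lf X (Atom b)"
        using pass
      proof
        assume "\<exists>i. game_le (R i) X"
        then obtain i where i: "game_le (R i) X" by blast
        have "\<not> game_lf (Atom b) (R i)" using trans_left(1)[OF i] nq by blast
        then have "game_le (R i) (Atom b)" using IHR by blast
        then show ?thesis using Comp by (auto simp: lfR_Comp)
      next
        assume "\<exists>i. game_le X (L i)"
        then obtain i where i: "game_le X (L i)" by blast
        then show ?thesis using trans_right(1)[OF i] pL by blast
      qed
      then show "game_le X (Atom b)" using pL Comp by (auto simp: le_atom_right_iff)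
    qed
    have part2: "game_lf X (Atom b) \<or> game_le (Atom b) X"
    proof (rule disjCI)
      assume nq: "\<not> game_le (Atom b) X"
      show "game_lf X (Atom b)"
      proof (rule ccontr)
        assume np: "\<not> game_lf X (Atom b)"
        then have nP: "\<And>i. \<not> game_le (R i) (Atom b)" using Comp by (auto simp: lfR_Comp)
        then have qR: "\<And>i. game_lf (Atom b) (R i)" using IHR by blast
        have "game_lf (Atom b) X"
          using pass
        proof
          assume "\<exists>i. game_le (R i) X"
          then obtain i where i: "game_le (R i) X" by blast
          then show ?thesis using trans_left(1)[OF i] qR by blast
        next
          assume "\<exists>i. game_le X (L i)"
          then obtain i where i: "game_le X (L i)" by blast
          have "\<not> game_lf (L i) (Atom b)" using trans_right(1)[OF i] np by blast
          then have "game_le (Atom b) (L i)" using IHL by blast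
          then show ?thesis using Comp by (auto simp: lfL_Comp)
        qed
        then have "game_le (Atom b) X" using qR Comp by (auto simp: le_atom_left_iff)
        then show False using nq by blast
      qed
    qed
    show ?thesis using part1 part2 by blast
  qed
qed

lemma opt_induct:
  assumes "\<And>X. (\<And>Y. Y \<in> lopts X \<union> ropts X \<Longrightarrow> P Y) \<Longrightarrow> P X"
  shows "P X"
proof (induction X)
  case (Atom a) show ?case by (rule assms) simp
next
  case (Comp L R) show ?case by (rule assms) (use Comp in auto)
qed

lemma passable_opts: "passable X \<Longrightarrow> Y \<in> lopts X \<union> ropts X \<Longrightarrow> passable Y"
  by (erule passable.cases) auto

lemma step:
  fixes G H :: "('a::linorder, 'i) game"
  assumes pG: "passable G" and pH: "passable H"
    and hL: "\<forall>HL\<in>lopts H. game_lf HL G \<or> game_le G HL"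
    and hR: "\<forall>GR\<in>ropts G. game_lf H GR \<or> game_le GR H"
  shows "game_lf G H \<or> game_le H G"
proof (cases "game_lf G H")
  case True then show ?thesis by blast
next
  case False
  note n = False
  have "game_le H G"
  proof (rule le_intro)
    show "\<forall>HL\<in>lopts H. game_lf HL G" using hL n lf_left by blast
    show "\<forall>GR\<in>ropts G. game_lf H GR" using hR n lf_right by blast
    show "is_atom H \<or> is_atom G \<longrightarrow> game_lf H G"
    proof
      assume "is_atom H \<or> is_atom G"
      then show "game_lf H G"
      proof
        assume "is_atom H"
        then obtain b where Hb: "H = Atom b" by (cases H) auto
        have "game_le G (Atom b) \<or> game_lf (Atom b) G" using atom_lemma[OF pG] by blast
        moreover have "\<not> game_le G (Atom b)" using n Hb by (auto simp: le_atom_right_iff)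
        ultimately show ?thesis using Hb by blast
      next
        assume "is_atom G"
        then obtain a where Ga: "G = Atom a" by (cases G) auto
        have "game_lf H (Atom a) \<or> game_le (Atom a) H" using atom_lemma[OF pH] by blast
        moreover have "\<not> game_le (Atom a) H" using n Ga by (auto simp: le_atom_left_iff)
        ultimately show ?thesis using Ga by blast
      qed
    qed
  qed
  then show ?thesis by blast
qed

lemma both:
  fixes G :: "('a::linorder, 'i) game"
  shows "\<forall>H. passable G \<longrightarrow> passable H \<longrightarrow> (game_lf G H \<or> game_le H G) \<and> (game_lf H G \<or> game_le G H)"
proof (induction G rule: opt_induct)
  case (1 G)
  note outer = 1
  show ?case
  proof
    fix H :: "('a, 'i) game"
    show "passable G \<longrightarrow> passable H \<longrightarrow> (game_lf G H \<or> game_le H G) \<and> (game_lf H G \<or> game_le G H)"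
    proof (induction H rule: opt_induct)
      case (1 H)
      note inner = 1
      show ?case
      proof (intro impI)
        assume pG: "passable G" and pH: "passable H"
        have hL1: "\<forall>HL\<in>lopts H. game_lf HL G \<or> game_le G HL"
        proof
          fix HL assume h: "HL \<in> lopts H"
          have "passable HL" using passable_opts[OF pH] h by blast
          then show "game_lf HL G \<or> game_le G HL" using inner[of HL] h pG by blast
        qed
        have hR1: "\<forall>GR\<in>ropts G. game_lf H GR \<or> game_le GR H"
        proof
          fix GR assume h: "GR \<in> ropts G"
          have "passable GR" using passable_opts[OF pG] h by blast
          then show "game_lf H GR \<or> game_le GR H" using outer[of GR] h pH by blast
        qed
        have hL2: "\<forall>GL\<in>lopts G. game_lf GL H \<or> game_le H GL"
        proof
          fix GL assume h: "GL \<in> lopts G"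
          have "passable GL" using passable_opts[OF pG] h by blast
          then show "game_lf GL H \<or> game_le H GL" using outer[of GL] h pH by blast
        qed
        have hR2: "\<forall>HR\<in>ropts H. game_lf G HR \<or> game_le HR G"
        proof
          fix HR assume h: "HR \<in> ropts H"
          have "passable HR" using passable_opts[OF pH] h by blast
          then show "game_lf G HR \<or> game_le HR G" using inner[of HR] h pG by blast
        qed
        have a: "game_lf G H \<or> game_le H G" by (rule step[OF pG pH hL1 hR1])
        have b: "game_lf H G \<or> game_le G H" by (rule step[OF pH pG hL2 hR2])
        show "(game_lf G H \<or> game_le H G) \<and> (game_lf H G \<or> game_le G H)" using a b by blast
      qed
    qed
  qed
qed

theorem lemma7p2:
  fixes G H :: "('a::linorder, 'i) game"
  assumes "passable G" and "passable H"
  shows "game_lf G H \<or> game_le H G"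
  using both assms by blast

end
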